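(* Let $\mathcal{M}=((X,\mathcal{C}_X),\mathcal{V})$ be a closure model with associated closure coalgebra $(X,\eta)$, let $(Y,\theta)$ be a $\mathbf{C}$-coalgebra and $f:(X,\eta)\to(Y,\theta)$ a surjective coalgebra homomorphism. Define $\mathcal{C}_Y(B)=\{y\in Y\mid B\in(\theta y)_2\}$ for $B\subseteq Y$. Then $(Y,\mathcal{C}_Y)$ is a closure space.
   Context: A closure space is $(X,\mathcal{C})$ with $X$ non-empty and $\mathcal{C}:\mathcal{P}(X)\to\mathcal{P}(X)$ satisfying $\mathcal{C}(\emptyset)=\emptyset$, $A\subseteq\mathcal{C}(A)$, $\mathcal{C}(A_1\cup A_2)=\mathcal{C}(A_1)\cup\mathcal{C}(A_2)$. Closure model: closure space plus $\mathcal{V}:AP\to\mathcal{P}(X)$, $\mathcal{V}^{-1}(x)=\{p\mid x\in\mathcal{V}(p)\}$. Closure functor $\mathbf{C}X=\mathcal{P}(AP)\times\mathcal{P}(\mathcal{P}(X))$, $\mathbf{C}f(v,S)=(v,\{f[A]\mid A\in S\})$ (covariant powerset). The closure coalgebra of the model is $\eta(x)=(\mathcal{V}^{-1}(x),\{A\subseteq X\mid x\in\mathcal{C}_X(A)\})$. A homomorphism $f:(X,\eta)\to(Y,\theta)$ satisfies $\theta\circ f=(\mathbf{C}f)\circ\eta$. *)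

theory Defs
  imports Main
begin

text \<open>Carriers are modelled as (automatically non-empty) types: X = UNIV :: 'x set.\<close>

definition closure_space :: "('x set \<Rightarrow> 'x set) \<Rightarrow> bool" where
  "closure_space C \<longleftrightarrow> C {} = {} \<and> (\<forall>A. A \<subseteq> C A) \<and> (\<forall>A1 A2. C (A1 \<union> A2) = C A1 \<union> C A2)"

text \<open>Closure functor: C X = P(AP) x P(P(X)).\<close>
type_synonym ('p, 'x) cfun = "'p set \<times> 'x set set"

definition Cmap :: "('x \<Rightarrow> 'y) \<Rightarrow> ('p, 'x) cfun \<Rightarrow> ('p, 'y) cfun" where
  "Cmap f vs = (fst vs, (\<lambda>A. f ` A) ` snd vs)"

definition Vinv :: "('p \<Rightarrow> 'x set) \<Rightarrow> 'x \<Rightarrow> 'p set" where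
  "Vinv V x = {p. x \<in> V p}"

definition closure_coalg :: "('x set \<Rightarrow> 'x set) \<Rightarrow> ('p \<Rightarrow> 'x set) \<Rightarrow> 'x \<Rightarrow> ('p, 'x) cfun" where
  "closure_coalg C V x = (Vinv V x, {A. x \<in> C A})"

definition coalg_hom :: "('x \<Rightarrow> ('p, 'x) cfun) \<Rightarrow> ('y \<Rightarrow> ('p, 'y) cfun) \<Rightarrow> ('x \<Rightarrow> 'y) \<Rightarrow> bool" where
  "coalg_hom \<eta> \<theta> f \<longleftrightarrow> (\<forall>x. \<theta> (f x) = Cmap f (\<eta> x))"

end

theory Submission
  imports Defs
begin

lemma isub1: "B1 \<union> B2 = f ` A \<Longrightarrow> B1 = f ` (A \<inter> f -` B1)"
proof (rule set_eqI)
  fix z assume h: "B1 \<union> B2 = f ` A"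
  show "z \<in> B1 \<longleftrightarrow> z \<in> f ` (A \<inter> f -` B1)"
  proof
    assume z: "z \<in> B1"
    then have "z \<in> f ` A" using h by (metis UnI1)
    then obtain a where "a \<in> A" "z = f a" by (rule imageE) simp
    then show "z \<in> f ` (A \<inter> f -` B1)" using z by simp
  next
    assume "z \<in> f ` (A \<inter> f -` B1)"
    then show "z \<in> B1" by (rule imageE) simp
  qed
qed

lemma isub2: "B1 \<union> B2 = f ` A \<Longrightarrow> B2 = f ` (A \<inter> f -` B2)"
  by (rule isub1[of B2 B1]) (simp add: Un_commute)

theorem lemma9:
  fixes CX :: "'x set \<Rightarrow> 'x set" and V :: "'p \<Rightarrow> 'x set"
    and \<theta> :: "'y \<Rightarrow> ('p, 'y) cfun" and f :: "'x \<Rightarrow> 'y"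
  assumes "closure_space CX"
    and "coalg_hom (closure_coalg CX V) \<theta> f"
    and "surj f"
  shows "closure_space (\<lambda>B. {y. B \<in> snd (\<theta> y)})"
proof -
  have e: "CX {} = {}" and ext: "\<And>A. A \<subseteq> CX A" and un: "\<And>A1 A2. CX (A1 \<union> A2) = CX A1 \<union> CX A2"
    using assms(1) unfolding closure_space_def by auto
  have th: "\<And>x. snd (\<theta> (f x)) = (\<lambda>A. f ` A) ` {A. x \<in> CX A}"
    using assms(2) unfolding coalg_hom_def Cmap_def closure_coalg_def by simp
  have key: "\<And>x B. B \<in> snd (\<theta> (f x)) \<longleftrightarrow> (\<exists>A. B = f ` A \<and> x \<in> CX A)"
    unfolding th by blast
  have sy: "\<And>y. \<exists>x. y = f x" using assms(3) by auto
  have img: "\<And>B. f ` (f -` B) = B" using assms(3) by (simp add: surj_image_vimage_eq)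
  show ?thesis unfolding closure_space_def
  proof (intro conjI allI)
    show "{y. {} \<in> snd (\<theta> y)} = {}"
    proof -
      { fix y assume y: "{} \<in> snd (\<theta> y)"
        obtain x where x: "y = f x" using sy by blast
        then obtain A where "{} = f ` A" "x \<in> CX A" using key y by blast
        then have False using e by simp }
      then show ?thesis by auto
    qed
  next
    fix B
    show "B \<subseteq> {y. B \<in> snd (\<theta> y)}"
    proof
      fix y assume "y \<in> B"
      obtain x where x: "y = f x" using sy by blast
      have "x \<in> CX (f -` B)" using ext \<open>y \<in> B\<close> x by blast
      then have "B \<in> snd (\<theta> (f x))" using key[of B x] img by metis
      then show "y \<in> {y. B \<in> snd (\<theta> y)}" using x by simp
    qed
  next
    fix B1 B2
    show "{y. B1 \<union> B2 \<in> snd (\<theta> y)} = {y. B1 \<in> snd (\<theta> y)} \<union> {y. B2 \<in> snd (\<theta> y)}"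
    proof (rule set_eqI)
      fix y
      obtain x where x: "y = f x" using sy by blast
      have "B1 \<union> B2 \<in> snd (\<theta> (f x)) \<longleftrightarrow> B1 \<in> snd (\<theta> (f x)) \<or> B2 \<in> snd (\<theta> (f x))"
      proof
        assume "B1 \<union> B2 \<in> snd (\<theta> (f x))"
        then obtain A where A: "B1 \<union> B2 = f ` A" "x \<in> CX A" using key by blast
        have "A = (A \<inter> f -` B1) \<union> (A \<inter> f -` B2)" using A(1) by auto
        then have "x \<in> CX ((A \<inter> f -` B1) \<union> (A \<inter> f -` B2))" using A(2) by simp
        then have o: "x \<in> CX (A \<inter> f -` B1) \<or> x \<in> CX (A \<inter> f -` B2)" by (simp only: un Un_iff)
        have i1: "B1 = f ` (A \<inter> f -` B1)" using A(1) by (rule isub1)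
        have i2: "B2 = f ` (A \<inter> f -` B2)" using A(1) by (rule isub2)
        show "B1 \<in> snd (\<theta> (f x)) \<or> B2 \<in> snd (\<theta> (f x))"
          using o key[of B1 x] key[of B2 x] i1 i2 by blast
      next
        assume "B1 \<in> snd (\<theta> (f x)) \<or> B2 \<in> snd (\<theta> (f x))"
        then show "B1 \<union> B2 \<in> snd (\<theta> (f x))"
        proof
          assume "B1 \<in> snd (\<theta> (f x))"
          then obtain A where A: "B1 = f ` A" "x \<in> CX A" using key by blast
          have i: "B1 \<union> B2 = f ` (A \<union> f -` B2)" using A(1) img[of B2] by (simp add: image_Un)
          have "x \<in> CX (A \<union> f -` B2)" using A(2) un by simp
          then show ?thesis using key[of "B1 \<union> B2" x] i by blast
        next
          assume "B2 \<in> snd (\<theta> (f x))"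
          then obtain A where A: "B2 = f ` A" "x \<in> CX A" using key by blast
          have i: "B1 \<union> B2 = f ` (f -` B1 \<union> A)" using A(1) img[of B1] by (simp add: image_Un)
          have "x \<in> CX (f -` B1 \<union> A)" using A(2) un by simp
          then show ?thesis using key[of "B1 \<union> B2" x] i by blast
        qed
      qed
      then show "y \<in> {y. B1 \<union> B2 \<in> snd (\<theta> y)} \<longleftrightarrow> y \<in> {y. B1 \<in> snd (\<theta> y)} \<union> {y. B2 \<in> snd (\<theta> y)}"
        using x by simp
    qed
  qed
qed

end
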